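(* Fix an integer $M \geq 2$. Consider a tensor network of $n$ tensors, each with at most $M$ entries, to be fully contracted to a scalar, whose underlying graph (vertices = tensors, edges = contracted indices) is planar. Then, for sufficiently large $n$, the tensor network can be contracted to a scalar by a sequence of pairwise contractions using fewer than $$2\, n^{1/\log_2(3/2)}\; M^{\,a_2' \sqrt{n}}$$ scalar operations, where $a_2' = \dfrac{c_{\mathrm{PST}}}{2-2\sqrt{2/3}}$.
   Context: A tensor network is a collection of tensors (multi-dimensional arrays of complex numbers) with finite-dimensional indices; an index shared by two tensors is contracted (summed over), and full contraction to a scalar sums over all indices. Contracting two tensors pairwise costs a number of scalar multiplications equal to the product of the dimensions of all indices of the two tensors (shared indices counted once), plus at most as many additions. The constant $c_{\mathrm{PST}}$ is the constant of the Planar Separator Theorem: every planar graph on $n$ vertices can be split into two mutually disconnected graphs of at most $2n/3$ vertices each by removing at most $c_{\mathrm{PST}}\sqrt{n} + O(1)$ vertices; it is known that one can take $c_{\mathrm{PST}} < 1.971$. *)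

theory Defs
  imports "HOL-Analysis.Analysis"
begin

definition simple_graph :: "'a set \<Rightarrow> 'a set set \<Rightarrow> bool" where
  "simple_graph V Eg \<longleftrightarrow> finite V \<and> (\<forall>e\<in>Eg. e \<subseteq> V \<and> card e = 2)"

definition planar_graph :: "'a set \<Rightarrow> 'a set set \<Rightarrow> bool" where
  "planar_graph V Eg \<longleftrightarrow>
     (\<exists>(p :: 'a \<Rightarrow> complex) (\<gamma> :: 'a set \<Rightarrow> real \<Rightarrow> complex).
        inj_on p V \<and>
        (\<forall>e\<in>Eg. arc (\<gamma> e) \<and> {pathstart (\<gamma> e), pathfinish (\<gamma> e)} = p ` e
                 \<and> path_image (\<gamma> e) \<inter> p ` V = p ` e) \<and>
        (\<forall>e\<in>Eg. \<forall>f\<in>Eg. e \<noteq> f \<longrightarrow> path_image (\<gamma> e) \<inter> path_image (\<gamma> f) = p ` (e \<inter> f)))"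

definition planar_separator_const :: "real \<Rightarrow> bool" where
  "planar_separator_const c \<longleftrightarrow>
     (\<exists>K::real. \<forall>(V :: nat set) Eg. simple_graph V Eg \<and> planar_graph V Eg \<longrightarrow>
        (\<exists>S A B. S \<union> A \<union> B = V \<and> S \<inter> A = {} \<and> S \<inter> B = {} \<and> A \<inter> B = {}
           \<and> real (card A) \<le> 2 * real (card V) / 3 \<and> real (card B) \<le> 2 * real (card V) / 3
           \<and> real (card S) \<le> c * sqrt (real (card V)) + K
           \<and> (\<forall>e\<in>Eg. \<not> (e \<inter> A \<noteq> {} \<and> e \<inter> B \<noteq> {}))))"

definition tensor_entries :: "'e set \<Rightarrow> ('e \<Rightarrow> nat set) \<Rightarrow> ('e \<Rightarrow> nat) \<Rightarrow> nat \<Rightarrow> nat" where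
  "tensor_entries E ends d v = (\<Prod>e\<in>{e\<in>E. v \<in> ends e}. d e)"

definition tensor_network :: "nat \<Rightarrow> 'e set \<Rightarrow> ('e \<Rightarrow> nat set) \<Rightarrow> ('e \<Rightarrow> nat) \<Rightarrow> nat \<Rightarrow> bool" where
  "tensor_network n E ends d M \<longleftrightarrow>
     finite E \<and> (\<forall>e\<in>E. ends e \<subseteq> {..<n} \<and> card (ends e) = 2 \<and> d e \<ge> 1)
     \<and> (\<forall>v<n. tensor_entries E ends d v \<le> M)"

definition underlying_edges :: "'e set \<Rightarrow> ('e \<Rightarrow> nat set) \<Rightarrow> nat set set" where
  "underlying_edges E ends = ends ` E"

text \<open>During contraction, the current tensors correspond to clusters (sets) of original
  tensors. The indices of the cluster tensor A are the original indices with exactly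
  one endpoint in A (indices internal to A have been summed over).\<close>

definition open_indices :: "'e set \<Rightarrow> ('e \<Rightarrow> nat set) \<Rightarrow> nat set \<Rightarrow> 'e set" where
  "open_indices E ends A = {e\<in>E. card (ends e \<inter> A) = 1}"

text \<open>Number of scalar operations for pairwise contraction of clusters A and B:
  product of dimensions of all indices of the two tensors (shared counted once)
  multiplications, plus at most as many additions; we count the worst case 2 * product.\<close>

definition pair_cost :: "'e set \<Rightarrow> ('e \<Rightarrow> nat set) \<Rightarrow> ('e \<Rightarrow> nat) \<Rightarrow> nat set \<Rightarrow> nat set \<Rightarrow> nat" where
  "pair_cost E ends d A B = 2 * (\<Prod>e\<in>open_indices E ends A \<union> open_indices E ends B. d e)"

fun valid_steps :: "nat set set \<Rightarrow> (nat set \<times> nat set) list \<Rightarrow> bool" where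
  "valid_steps P [] \<longleftrightarrow> card P = 1"
| "valid_steps P ((A, B) # s) \<longleftrightarrow>
     A \<in> P \<and> B \<in> P \<and> A \<noteq> B \<and> valid_steps (insert (A \<union> B) (P - {A, B})) s"

fun steps_cost :: "'e set \<Rightarrow> ('e \<Rightarrow> nat set) \<Rightarrow> ('e \<Rightarrow> nat) \<Rightarrow> (nat set \<times> nat set) list \<Rightarrow> nat" where
  "steps_cost E ends d [] = 0"
| "steps_cost E ends d ((A, B) # s) = pair_cost E ends d A B + steps_cost E ends d s"

definition contraction_sequence :: "nat \<Rightarrow> (nat set \<times> nat set) list \<Rightarrow> bool" where
  "contraction_sequence n s \<longleftrightarrow> valid_steps ((\<lambda>v. {v}) ` {..<n}) s"

end

theory Submission
  imports Defs "HOL-Real_Asymp.Real_Asymp"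
begin


lemma int01: "(u::real) \<in> \<int> \<Longrightarrow> 0 \<le> u \<Longrightarrow> u \<le> 1 \<Longrightarrow> u = 0 \<or> u = 1"
proof -
  assume "u \<in> \<int>" "0 \<le> u" "u \<le> 1"
  then obtain m where m: "u = of_int m" by (auto elim: Ints_cases)
  then have "0 \<le> m" "m \<le> 1" using \<open>0 \<le> u\<close> \<open>u \<le> 1\<close> by linarith+
  then have "m = 0 \<or> m = 1" by linarith
  then show ?thesis using m by auto
qed

lemma int3: "(w::real) \<in> \<int> \<Longrightarrow> -1 \<le> w \<Longrightarrow> w \<le> 1 \<Longrightarrow> w = -1 \<or> w = 0 \<or> w = 1"
proof -
  assume "w \<in> \<int>" "-1 \<le> w" "w \<le> 1"
  then obtain m where m: "w = of_int m" by (auto elim: Ints_cases)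
  then have "-1 \<le> m" "m \<le> 1" using \<open>-1 \<le> w\<close> \<open>w \<le> 1\<close> by linarith+
  then have "m = -1 \<or> m = 0 \<or> m = 1" by linarith
  then show ?thesis using m by auto
qed

lemma seg_param: "z \<in> closed_segment a (a + t) \<longleftrightarrow> (\<exists>u::real. 0 \<le> u \<and> u \<le> 1 \<and> z = a + u *\<^sub>R t)"
  by (auto simp: in_segment algebra_simps)

definition latt :: "complex \<Rightarrow> bool" where "latt z \<longleftrightarrow> Re z \<in> \<int> \<and> Im z \<in> \<int>"

lemma seg_latt:
  assumes "latt a" "latt z" "t \<in> {1, \<i>}" "0 \<le> u" "u \<le> 1" "z = a + u *\<^sub>R t"
  shows "z = a \<or> z = a + t"
proof -
  have "u \<in> \<int>"
  proof (cases "t = 1")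
    case True
    then have "u = Re z - Re a" using assms(6) by simp
    then show ?thesis using assms(1,2) unfolding latt_def by auto
  next
    case False
    then have "t = \<i>" using assms(3) by auto
    then have "u = Im z - Im a" using assms(6) by simp
    then show ?thesis using assms(1,2) unfolding latt_def by auto
  qed
  then have "u = 0 \<or> u = 1" using int01 assms(4,5) by blast
  then show ?thesis using assms(6) by auto
qed

lemma seg_inter:
  assumes "latt a" "latt b" "t \<in> {1, \<i>}" "s \<in> {1, \<i>}"
    "0 \<le> u" "u \<le> 1" "0 \<le> v" "v \<le> 1" "z = a + u *\<^sub>R t" "z = b + v *\<^sub>R s"
  shows "(a = b \<and> t = s) \<or> ((z = a \<or> z = a + t) \<and> (z = b \<or> z = b + s))"
proof -
  have ra: "Re a \<in> \<int>" "Im a \<in> \<int>" "Re b \<in> \<int>" "Im b \<in> \<int>" using assms(1,2) by (auto simp: latt_def)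
  consider "t = 1" "s = 1" | "t = 1" "s = \<i>" | "t = \<i>" "s = 1" | "t = \<i>" "s = \<i>" using assms(3,4) by auto
  then show ?thesis
  proof cases
    case 1
    then have e1: "Im a = Im b" and e2: "Re a + u = Re b + v" using assms(9,10) by (auto simp: complex_eq_iff)
    have "v - u \<in> \<int>" proof -
      have "v - u = Re a - Re b" using e2 by linarith
      then show ?thesis using ra by auto
    qed
    then have "v - u = -1 \<or> v - u = 0 \<or> v - u = 1"
      using assms(5-8) int3[of "v - u"] by linarith
    then show ?thesis
    proof (elim disjE)
      assume "v - u = 0" then have "a = b" using e1 e2 by (simp add: complex_eq_iff)
      then show ?thesis using 1 by simp
    next
      assume "v - u = -1" then have "u = 1" "v = 0" using assms(5-8) by auto
      then show ?thesis using assms(9,10) by auto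
    next
      assume "v - u = 1" then have "u = 0" "v = 1" using assms(5-8) by auto
      then show ?thesis using assms(9,10) by auto
    qed
  next
    case 2
    then have "Im a = Im b + v" "Re a + u = Re b" using assms(9,10) by (auto simp: complex_eq_iff)
    then have "v = Im a - Im b" "u = Re b - Re a" by linarith+
    then have "u \<in> \<int>" "v \<in> \<int>" using ra by auto
    then have "(u = 0 \<or> u = 1) \<and> (v = 0 \<or> v = 1)" using int01 assms(5-8) by blast
    then show ?thesis using assms(9,10) by auto
  next
    case 3
    then have "Im a + u = Im b" "Re a = Re b + v" using assms(9,10) by (auto simp: complex_eq_iff)
    then have "u = Im b - Im a" "v = Re a - Re b" by linarith+
    then have "u \<in> \<int>" "v \<in> \<int>" using ra by auto
    then have "(u = 0 \<or> u = 1) \<and> (v = 0 \<or> v = 1)" using int01 assms(5-8) by blast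
    then show ?thesis using assms(9,10) by auto
  next
    case 4
    then have e1: "Re a = Re b" and e2: "Im a + u = Im b + v" using assms(9,10) by (auto simp: complex_eq_iff)
    have "v - u \<in> \<int>" proof -
      have "v - u = Im a - Im b" using e2 by linarith
      then show ?thesis using ra by auto
    qed
    then have "v - u = -1 \<or> v - u = 0 \<or> v - u = 1"
      using assms(5-8) int3[of "v - u"] by linarith
    then show ?thesis
    proof (elim disjE)
      assume "v - u = 0" then have "a = b" using e1 e2 by (simp add: complex_eq_iff)
      then show ?thesis using 4 by simp
    next
      assume "v - u = -1" then have "u = 1" "v = 0" using assms(5-8) by auto
      then show ?thesis using assms(9,10) by auto
    next
      assume "v - u = 1" then have "u = 0" "v = 1" using assms(5-8) by auto
      then show ?thesis using assms(9,10) by auto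
    qed
  qed
qed


lemma planar_from_lattice:
  assumes inj: "inj_on p V" and lat: "\<forall>v\<in>V. latt (p v)"
    and ed: "\<forall>e\<in>Eg. \<exists>a b t. e = {a,b} \<and> a\<in>V \<and> b\<in>V \<and> t\<in>{1,\<i>} \<and> p b = p a + t"
  shows "planar_graph V Eg"
proof -
  obtain A B T where ABT: "\<And>e. e \<in> Eg \<Longrightarrow> e = {A e, B e} \<and> A e \<in> V \<and> B e \<in> V \<and> T e \<in> {1,\<i>} \<and> p (B e) = p (A e) + T e"
    using ed by metis
  define \<gamma> where "\<gamma> e = linepath (p (A e)) (p (B e))" for e
  have T0: "T e \<noteq> 0" if "e \<in> Eg" for e using ABT[OF that] by auto
  have neq: "p (A e) \<noteq> p (B e)" if "e \<in> Eg" for e using ABT[OF that] T0[OF that] by auto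
  have pim: "path_image (\<gamma> e) = closed_segment (p (A e)) (p (A e) + T e)" if "e \<in> Eg" for e
    using ABT[OF that] by (simp add: \<gamma>_def)
  have eVg: "e \<subseteq> V" if e: "e \<in> Eg" for e using ABT[OF e] by (metis empty_subsetI insert_subset)
  have pe: "p ` e \<subseteq> path_image (\<gamma> e)" if e: "e \<in> Eg" for e
  proof -
    have eq: "p ` e = {p (A e), p (B e)}" using ABT[OF e] by (metis image_insert image_empty)
    have "p (A e) \<in> path_image (\<gamma> e)" "p (B e) \<in> path_image (\<gamma> e)" by (simp_all add: \<gamma>_def)
    then show ?thesis using eq by auto
  qed
  have P1: "path_image (\<gamma> e) \<inter> p ` V = p ` e" if e: "e \<in> Eg" for e
  proof
    show "path_image (\<gamma> e) \<inter> p ` V \<subseteq> p ` e"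
    proof
      fix z assume z: "z \<in> path_image (\<gamma> e) \<inter> p ` V"
      then obtain u where u: "0 \<le> u" "u \<le> 1" "z = p (A e) + u *\<^sub>R T e"
        using pim[OF e] seg_param by blast
      have "z = p (A e) \<or> z = p (A e) + T e"
        by (rule seg_latt[OF _ _ _ u]) (use z lat ABT[OF e] in auto)
      then show "z \<in> p ` e" using ABT[OF e] by (metis imageI insertI1 insertI2 singletonI)
    qed
  next
    show "p ` e \<subseteq> path_image (\<gamma> e) \<inter> p ` V"
    proof -
      have "e \<subseteq> V" using ABT[OF e] by (metis empty_subsetI insert_subset)
      then show ?thesis using pe[OF e] by auto
    qed
  qed
  have P2: "path_image (\<gamma> e) \<inter> path_image (\<gamma> f) = p ` (e \<inter> f)" if e: "e \<in> Eg" and f: "f \<in> Eg" and ef: "e \<noteq> f" for e f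
  proof
    have eV: "e \<subseteq> V" "f \<subseteq> V" using eVg e f by auto
    show "path_image (\<gamma> e) \<inter> path_image (\<gamma> f) \<subseteq> p ` (e \<inter> f)"
    proof
      fix z assume z: "z \<in> path_image (\<gamma> e) \<inter> path_image (\<gamma> f)"
      then obtain u where u: "0 \<le> u" "u \<le> 1" "z = p (A e) + u *\<^sub>R T e"
        using pim[OF e] seg_param by blast
      obtain v where v: "0 \<le> v" "v \<le> 1" "z = p (A f) + v *\<^sub>R T f"
        using z pim[OF f] seg_param by blast
      have "(p (A e) = p (A f) \<and> T e = T f) \<or> ((z = p (A e) \<or> z = p (A e) + T e) \<and> (z = p (A f) \<or> z = p (A f) + T f))"
        by (rule seg_inter[OF _ _ _ _ u(1,2) v(1,2) u(3) v(3)]) (use lat ABT[OF e] ABT[OF f] in auto)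
      then show "z \<in> p ` (e \<inter> f)"
      proof
        assume "p (A e) = p (A f) \<and> T e = T f"
        then have "A e = A f" "B e = B f" using ABT[OF e] ABT[OF f] inj by (metis inj_on_def)+
        then have "e = f" using ABT[OF e] ABT[OF f] by metis
        then show ?thesis using ef by simp
      next
        assume "(z = p (A e) \<or> z = p (A e) + T e) \<and> (z = p (A f) \<or> z = p (A f) + T f)"
        then have "z = p (A e) \<or> z = p (B e)" "z = p (A f) \<or> z = p (B f)"
          using ABT[OF e] ABT[OF f] by simp_all
        moreover have "p ` e = {p (A e), p (B e)}" "p ` f = {p (A f), p (B f)}"
          using ABT[OF e] ABT[OF f] by (metis image_insert image_empty)+
        ultimately have "z \<in> p ` e \<inter> p ` f" by auto
        also have "p ` e \<inter> p ` f = p ` (e \<inter> f)" using inj eV by (simp add: inj_on_image_Int)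
        finally show ?thesis .
      qed
    qed
  next
    show "p ` (e \<inter> f) \<subseteq> path_image (\<gamma> e) \<inter> path_image (\<gamma> f)"
      using pe[OF e] pe[OF f] by auto
  qed
  show ?thesis unfolding planar_graph_def
  proof (intro exI[of _ p] exI[of _ \<gamma>] conjI ballI impI)
    show "inj_on p V" by fact
  next
    fix e assume e: "e \<in> Eg"
    show "arc (\<gamma> e)" using neq[OF e] by (simp add: \<gamma>_def)
    have "p ` e = {p (A e), p (B e)}" using ABT[OF e] by (metis image_insert image_empty)
    then show "{pathstart (\<gamma> e), pathfinish (\<gamma> e)} = p ` e" by (simp add: \<gamma>_def)
    show "path_image (\<gamma> e) \<inter> p ` V = p ` e" by (rule P1[OF e])
  next
    fix e f assume "e \<in> Eg" "f \<in> Eg" "e \<noteq> f"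
    then show "path_image (\<gamma> e) \<inter> path_image (\<gamma> f) = p ` (e \<inter> f)" by (rule P2)
  qed
qed


lemma q_div: "j < k \<Longrightarrow> (i*k+j) div (k::nat) = i" by simp
lemma q_mod: "j < k \<Longrightarrow> (i*k+j) mod (k::nat) = j" by simp
lemma q_lt: "i < k \<Longrightarrow> j < k \<Longrightarrow> i*k+j < k*(k::nat)"
proof -
  assume "i < k" "j < k"
  then have "i*k + j < i*k + k" by simp
  also have "\<dots> = (i+1)*k" by simp
  also have "\<dots> \<le> k*k" using \<open>i<k\<close> by (metis Suc_eq_plus1 Suc_leI mult_le_mono1)
  finally show ?thesis .
qed

definition gridE :: "nat \<Rightarrow> nat set set" where
  "gridE k = {{i*k+j, i*k+(j+1)} | i j. i<k \<and> j+1<k} \<union> {{i*k+j, (i+1)*k+j} | i j. i+1<k \<and> j<k}"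

lemma grid_planar:
  assumes "k \<ge> 1"
  shows "planar_graph {..<k*k} (gridE k)"
proof -
  have h1: "inj_on (\<lambda>v. Complex (real (v div k)) (real (v mod k))) {..<k*k}"
    by (rule inj_onI) (metis complex.inject div_mod_decomp of_nat_eq_iff)
  have h2: "\<forall>v\<in>{..<k*k}. latt (Complex (real (v div k)) (real (v mod k)))"
    by (auto simp: latt_def)
  have h3: "\<forall>e\<in>gridE k. \<exists>a b t. e = {a, b} \<and> a \<in> {..<k*k} \<and> b \<in> {..<k*k} \<and> t \<in> {1, \<i>} \<and>
      Complex (real (b div k)) (real (b mod k)) = Complex (real (a div k)) (real (a mod k)) + t"
  proof
    fix e assume "e \<in> gridE k"
    then consider i j where "e = {i*k+j, i*k+(j+1)}" "i<k" "j+1<k"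
      | i j where "e = {i*k+j, (i+1)*k+j}" "i+1<k" "j<k" unfolding gridE_def by blast
    then show "\<exists>a b t. e = {a, b} \<and> a \<in> {..<k*k} \<and> b \<in> {..<k*k} \<and> t \<in> {1, \<i>} \<and>
      Complex (real (b div k)) (real (b mod k)) = Complex (real (a div k)) (real (a mod k)) + t"
    proof cases
      case 1
      have d: "(i*k+(j+1)) div k = i" "(i*k+(j+1)) mod k = j+1" using 1 q_div q_mod by blast+
      show ?thesis
        apply (rule exI[of _ "i*k+j"], rule exI[of _ "i*k+(j+1)"], rule exI[of _ \<i>])
        using 1 q_lt[of i k j] q_lt[of i k "j+1"] d by (auto simp: complex_eq_iff simp del: add_Suc_right Suc_eq_plus1 add.assoc)
    next
      case 2
      have d: "((i+1)*k+j) div k = i+1" "((i+1)*k+j) mod k = j" using 2 q_div q_mod by blast+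
      show ?thesis
        apply (rule exI[of _ "i*k+j"], rule exI[of _ "(i+1)*k+j"], rule exI[of _ 1])
        using 2 q_lt[of i k j] q_lt[of "i+1" k j] d by (auto simp: complex_eq_iff)
    qed
  qed
  show ?thesis by (rule planar_from_lattice[OF h1 h2 h3])
qed

lemma grid_simple:
  assumes "k \<ge> 1"
  shows "simple_graph {..<k*k} (gridE k)"
  unfolding simple_graph_def
proof (intro conjI)
  show "finite {..<k*k}" by simp
  show "\<forall>e\<in>gridE k. e \<subseteq> {..<k*k} \<and> card e = 2"
  proof
  fix e assume "e \<in> gridE k"
  then consider i j where "e = {i*k+j, i*k+(j+1)}" "i<k" "j+1<k"
      | i j where "e = {i*k+j, (i+1)*k+j}" "i+1<k" "j<k" unfolding gridE_def by blast
  then show "e \<subseteq> {..<k*k} \<and> card e = 2"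
  proof cases
    case 1 then show ?thesis using q_lt[of i k j] q_lt[of i k "j+1"] by auto
  next
    case 2 then show ?thesis using q_lt[of i k j] q_lt[of "i+1" k j] assms by auto
  qed
  qed
qed


lemma gridE_h: "i<k \<Longrightarrow> j+1<k \<Longrightarrow> {i*k+j, i*k+(j+1)} \<in> gridE k"
  unfolding gridE_def by (rule UnI1, rule CollectI, rule exI[of _ i], rule exI[of _ j]) simp
lemma gridE_v: "i+1<k \<Longrightarrow> j<k \<Longrightarrow> {i*k+j, (i+1)*k+j} \<in> gridE k"
  unfolding gridE_def by (rule UnI2, rule CollectI, rule exI[of _ i], rule exI[of _ j]) simp

lemma grid_sep_False:
  assumes k: "k \<ge> 1"
    and part: "S \<union> A \<union> B = {..<k*k}" "S \<inter> A = {}" "S \<inter> B = {}" "A \<inter> B = {}"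
    and cA: "real (card A) \<le> 2 * real (card {..<k*k}) / 3"
    and cB: "real (card B) \<le> 2 * real (card {..<k*k}) / 3"
    and sep: "\<forall>e\<in>gridE k. \<not> (e \<inter> A \<noteq> {} \<and> e \<inter> B \<noteq> {})"
    and small: "3 * card S < k"
  shows False
proof -
  define q where "q i j = i*k+j" for i j
  have qV: "q i j \<in> {..<k*k}" if "i<k" "j<k" for i j using q_lt[OF that] by (simp add: q_def)
  have sub: "S \<subseteq> {..<k*k}" "A \<subseteq> {..<k*k}" "B \<subseteq> {..<k*k}" using part(1) by blast+
  have finS: "finite S" and finA: "finite A" and finB: "finite B"
    by (rule finite_subset[OF sub(1)], simp) (rule finite_subset[OF sub(2)], simp, rule finite_subset[OF sub(3)], simp)
  have adj: "(u \<in> A \<longleftrightarrow> v \<in> A)" if "{u,v} \<in> gridE k" "u \<in> {..<k*k}" "v \<in> {..<k*k}" "u \<notin> S" "v \<notin> S" for u v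
  proof -
    have uv: "u \<in> A \<or> u \<in> B" "v \<in> A \<or> v \<in> B" using that(2-5) part(1) by blast+
    have ne: "\<not> ({u,v} \<inter> A \<noteq> {} \<and> {u,v} \<inter> B \<noteq> {})" by (rule bspec[OF sep that(1)])
    show ?thesis
    proof
      assume uA: "u \<in> A"
      show "v \<in> A"
      proof (rule ccontr)
        assume "v \<notin> A"
        then have "v \<in> B" using uv by simp
        then have "{u,v} \<inter> A \<noteq> {}" "{u,v} \<inter> B \<noteq> {}" using uA by auto
        then show False using ne by simp
      qed
    next
      assume vA: "v \<in> A"
      show "u \<in> A"
      proof (rule ccontr)
        assume "u \<notin> A"
        then have "u \<in> B" using uv by simp
        then have "{u,v} \<inter> A \<noteq> {}" "{u,v} \<inter> B \<noteq> {}" using vA by auto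
        then show False using ne by simp
      qed
    qed
  qed
  define R where "R = {i. i<k \<and> (\<forall>j<k. q i j \<notin> S)}"
  have "{..<k} - R \<subseteq> (\<lambda>v. v div k) ` S"
  proof
    fix i assume "i \<in> {..<k} - R"
    then obtain j where "i<k" "j<k" "q i j \<in> S" unfolding R_def by auto
    then show "i \<in> (\<lambda>v. v div k) ` S" by (metis image_eqI q_def q_div)
  qed
  then have "card ({..<k} - R) \<le> card ((\<lambda>v. v div k) ` S)" by (intro card_mono) (use finS in auto)
  also have "\<dots> \<le> card S" by (rule card_image_le[OF finS])
  finally have "card ({..<k} - R) \<le> card S" .
  moreover have "R \<subseteq> {..<k}" unfolding R_def by auto
  ultimately have cR: "k \<le> card R + card S"
    using card_Diff_subset[of R "{..<k}"] finite_subset[OF \<open>R \<subseteq> {..<k}\<close>] card_mono[OF _ \<open>R \<subseteq> {..<k}\<close>] by simp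
  have "card ((\<lambda>v. v mod k) ` S) < k" using small card_image_le[OF finS, of "\<lambda>v. v mod k"] by linarith
  then have "\<not> {..<k} \<subseteq> (\<lambda>v. v mod k) ` S"
    using card_mono[OF finite_imageI[OF finS], of "{..<k}" "\<lambda>v. v mod k"] by auto
  then obtain j0 where j0: "j0 < k" "j0 \<notin> (\<lambda>v. v mod k) ` S" by auto
  have colS: "q i j0 \<notin> S" for i using j0 by (metis image_eqI q_def q_mod)
  have col: "q i j0 \<in> A \<longleftrightarrow> q 0 j0 \<in> A" if "i < k" for i
    using that
  proof (induction i)
    case 0 then show ?case by simp
  next
    case (Suc i)
    have "{q i j0, q (Suc i) j0} \<in> gridE k" unfolding q_def using gridE_v[of i k j0] Suc.prems j0 by simp
    moreover have "q i j0 \<in> {..<k*k}" "q (Suc i) j0 \<in> {..<k*k}" using qV Suc.prems j0 by auto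
    ultimately have "q i j0 \<in> A \<longleftrightarrow> q (Suc i) j0 \<in> A" using adj colS by blast
    then show ?case using Suc by simp
  qed
  have row: "q i j \<in> A \<longleftrightarrow> q i 0 \<in> A" if "i \<in> R" "j < k" for i j
    using that(2)
  proof (induction j)
    case 0 then show ?case by simp
  next
    case (Suc j)
    have ik: "i < k" using that(1) R_def by auto
    have "{q i j, q i (Suc j)} \<in> gridE k" unfolding q_def using gridE_h[of i k j] Suc.prems ik by simp
    moreover have "q i j \<in> {..<k*k}" "q i (Suc j) \<in> {..<k*k}" using qV Suc.prems ik by auto
    moreover have "q i j \<notin> S" "q i (Suc j) \<notin> S" using that(1) Suc.prems unfolding R_def by auto
    ultimately have "q i j \<in> A \<longleftrightarrow> q i (Suc j) \<in> A" using adj by blast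
    then show ?case using Suc by simp
  qed
  have all: "q i j \<in> A \<longleftrightarrow> q 0 j0 \<in> A" if "i \<in> R" "j < k" for i j
  proof -
    have "i < k" using that(1) R_def by simp
    then show ?thesis using row[OF that] row[OF that(1) j0(1)] col[of i] by blast
  qed
  define G where "G = (\<lambda>(i,j). q i j) ` (R \<times> {..<k})"
  have injG: "inj_on (\<lambda>(i,j). q i j) (R \<times> {..<k})"
  proof (rule inj_onI)
    fix x y assume "x \<in> R \<times> {..<k}" "y \<in> R \<times> {..<k}" "(\<lambda>(i,j). q i j) x = (\<lambda>(i,j). q i j) y"
    then show "x = y" unfolding q_def by (cases x, cases y) (simp, metis q_div q_mod)
  qed
  have cG: "card G = card R * k" unfolding G_def using card_image[OF injG] by (simp add: card_cartesian_product)
  have Gmem: "\<exists>i j. x = q i j \<and> i \<in> R \<and> j < k" if "x \<in> G" for x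
    using that unfolding G_def by auto
  have GV: "x \<in> {..<k*k} \<and> x \<notin> S" if xG: "x \<in> G" for x
  proof -
    obtain i j where x: "x = q i j" "i \<in> R" "j < k" using Gmem[OF xG] by blast
    then have "i < k" "q i j \<notin> S" unfolding R_def by auto
    then show ?thesis using qV x by auto
  qed
  have GA: "x \<in> A \<longleftrightarrow> q 0 j0 \<in> A" if xG: "x \<in> G" for x
  proof -
    obtain i j where x: "x = q i j" "i \<in> R" "j < k" using Gmem[OF xG] by blast
    then show ?thesis using all[OF x(2,3)] by simp
  qed
  have "G \<subseteq> A \<or> G \<subseteq> B"
  proof (cases "q 0 j0 \<in> A")
    case True then show ?thesis using GA by blast
  next
    case False
    have "G \<subseteq> B"
    proof
      fix x assume x: "x \<in> G"
      then have "x \<notin> A" using GA False by blast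
      then show "x \<in> B" using GV[OF x] part(1) by auto
    qed
    then show ?thesis by simp
  qed
  then have "card G \<le> card A \<or> card G \<le> card B"
    using card_mono[OF finA, of G] card_mono[OF finB, of G] by blast
  then have h: "card R * k \<le> card A \<or> card R * k \<le> card B" using cG by simp
  have cA': "real (card A) \<le> 2 * real (k*k) / 3" and cB': "real (card B) \<le> 2 * real (k*k) / 3"
    using cA cB by simp_all
  have "real (card R * k) \<le> 2 * real (k*k) / 3"
  proof (cases "card R * k \<le> card A")
    case True
    then have "real (card R * k) \<le> real (card A)" by (simp only: of_nat_le_iff)
    then show ?thesis using cA' by linarith
  next
    case False
    then have "card R * k \<le> card B" using h by simp
    then have "real (card R * k) \<le> real (card B)" by (simp only: of_nat_le_iff)
    then show ?thesis using cB' by linarith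
  qed
  then have "real ((3 * card R) * k) \<le> real ((2 * k) * k)" by simp
  then have "(3 * card R) * k \<le> (2 * k) * k" by (simp only: of_nat_le_iff)
  then have "3 * card R \<le> 2 * k" using k by simp
  then show False using cR small by linarith
qed


lemma sep_const_pos:
  assumes "planar_separator_const c"
  shows "c > 0"
proof (rule ccontr)
  assume "\<not> c > 0"
  then have c0: "c \<le> 0" by simp
  obtain K where K: "\<forall>(V :: nat set) Eg. simple_graph V Eg \<and> planar_graph V Eg \<longrightarrow>
        (\<exists>S A B. S \<union> A \<union> B = V \<and> S \<inter> A = {} \<and> S \<inter> B = {} \<and> A \<inter> B = {}
           \<and> real (card A) \<le> 2 * real (card V) / 3 \<and> real (card B) \<le> 2 * real (card V) / 3
           \<and> real (card S) \<le> c * sqrt (real (card V)) + K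
           \<and> (\<forall>e\<in>Eg. \<not> (e \<inter> A \<noteq> {} \<and> e \<inter> B \<noteq> {})))"
    by (insert assms, unfold planar_separator_const_def, elim exE, rule that, assumption)
  define k where "k = nat \<lceil>3*K\<rceil> + 1"
  have k1: "k \<ge> 1" unfolding k_def by simp
  have kK: "real k > 3 * K" unfolding k_def by linarith
  note ex = K[rule_format, OF conjI[OF grid_simple[OF k1] grid_planar[OF k1]]]
  obtain S A B where SAB: "S \<union> A \<union> B = {..<k*k}" "S \<inter> A = {}" "S \<inter> B = {}" "A \<inter> B = {}"
           "real (card A) \<le> 2 * real (card {..<k*k}) / 3" "real (card B) \<le> 2 * real (card {..<k*k}) / 3"
           "real (card S) \<le> c * sqrt (real (card {..<k*k})) + K"
           "\<forall>e\<in>gridE k. \<not> (e \<inter> A \<noteq> {} \<and> e \<inter> B \<noteq> {})"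
    by (insert ex, elim exE conjE, rule that, assumption+)
  have "c * sqrt (real (card {..<k*k})) \<le> 0" using c0 by (simp add: mult_nonpos_nonneg)
  then have "real (card S) \<le> K" using SAB(7) by linarith
  then have "real (3 * card S) < real k" using kK by simp
  then have "3 * card S < k" by (simp only: of_nat_less_iff)
  then show False using grid_sep_False[OF k1 SAB(1-6) SAB(8)] by blast
qed


lemma sqrt_add_le:
  fixes x y :: real
  assumes "x > 0" "y \<ge> 0"
  shows "sqrt (x + y) \<le> sqrt x + y / (2 * sqrt x)"
proof -
  have sx: "sqrt x > 0" using assms(1) by simp
  define z where "z = sqrt x + y / (2 * sqrt x)"
  have z0: "z \<ge> 0" unfolding z_def using sx assms(2) by simp
  have "z^2 = (sqrt x)^2 + 2 * sqrt x * (y / (2 * sqrt x)) + (y / (2 * sqrt x))^2"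
    unfolding z_def by (simp add: power2_sum)
  also have "\<dots> = x + y + (y / (2 * sqrt x))^2" using sx assms(1) by simp
  finally have "x + y \<le> z^2" by simp
  then have "sqrt (x + y) \<le> sqrt (z^2)" by (rule real_sqrt_le_mono)
  also have "\<dots> = z" using z0 by simp
  finally show ?thesis unfolding z_def .
qed

lemma numeric:
  fixes c K x :: real
  fixes r \<alpha> Kp D \<beta> :: real and \<Phi> :: "real \<Rightarrow> real"
  assumes r_def: "r = sqrt (2/3)"
  assumes \<alpha>_def: "\<alpha> = c / (1 - r)"
  assumes Kp_def: "Kp = max K 0"
  assumes D_def: "D = Kp + \<alpha> * (c + Kp) / (2 * r)"
  assumes \<beta>_def: "\<beta> = 10 * D"
  assumes \<Phi>_def: "\<Phi> = (\<lambda>t. \<alpha> * sqrt t + \<beta> * ln t)"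
  assumes c: "c > 0" and x1: "x \<ge> 1"
   and E1: "\<alpha> * sqrt x \<ge> 50 * (c + Kp)^2"
   and E2: "(\<alpha> - c) * sqrt (\<alpha> * sqrt x / 2) \<ge> \<beta> * ln x + Kp"
  shows "(\<forall>m. 2*m > \<alpha> * sqrt x \<longrightarrow> 1 \<le> m \<longrightarrow> c * sqrt m + K < m / 3)
    \<and> (\<forall>m. 2*m > \<alpha> * sqrt x \<longrightarrow> 1 \<le> m \<longrightarrow> \<Phi> x - \<Phi> m + c * sqrt m + K \<le> \<alpha> * sqrt x)
    \<and> (\<forall>m s m'. 2*m > \<alpha> * sqrt x \<longrightarrow> 1 \<le> m \<longrightarrow> 0 \<le> s \<longrightarrow> s \<le> c * sqrt m + K \<longrightarrow> 1 \<le> m' \<longrightarrow>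
               m' \<le> 2*m/3 + s \<longrightarrow> \<Phi> m' + s \<le> \<Phi> m)"
proof -
  have r0: "r > 0" unfolding r_def by simp
  have r1: "r < 1" unfolding r_def by simp
  have \<alpha>0: "\<alpha> > 0" unfolding \<alpha>_def using c r1 by simp
  have \<alpha>r: "\<alpha> = \<alpha> * r + c" unfolding \<alpha>_def using r1 by (simp add: field_simps)
  have Kp0: "Kp \<ge> 0" and KKp: "K \<le> Kp" unfolding Kp_def by auto
  have D0: "D \<ge> 0" unfolding D_def using Kp0 \<alpha>0 c r0 by simp
  have \<beta>0: "\<beta> \<ge> 0" unfolding \<beta>_def using D0 by simp
  have big: "c * sqrt m + Kp \<le> m / 5" "sqrt m \<ge> 1" if m: "2*m > \<alpha> * sqrt x" "1 \<le> m" for m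
  proof -
    have "m \<ge> 25 * (c + Kp)^2" using m E1 by linarith
    then have "sqrt (25 * (c + Kp)^2) \<le> sqrt m" by (rule real_sqrt_le_mono)
    moreover have "sqrt (25 * (c + Kp)^2) = 5 * (c + Kp)" using c Kp0 by (simp add: real_sqrt_mult)
    ultimately have s5: "5 * (c + Kp) \<le> sqrt m" by simp
    show sm1: "sqrt m \<ge> 1" using m(2) by simp
    have "c * sqrt m + Kp \<le> c * sqrt m + Kp * sqrt m" using sm1 Kp0 by (simp add: mult_left_mono[of 1 "sqrt m" Kp, simplified])
    also have "\<dots> = (c + Kp) * sqrt m" by (simp add: algebra_simps)
    also have "\<dots> \<le> (sqrt m / 5) * sqrt m" using s5 m(2) by (intro mult_right_mono) auto
    also have "\<dots> = m / 5" using m(2) by simp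
    finally show "c * sqrt m + Kp \<le> m / 5" .
  qed
  have Na: "c * sqrt m + K < m / 3" if m: "2*m > \<alpha> * sqrt x" "1 \<le> m" for m
    using big[OF m] KKp m(2) by linarith
  have Nb: "\<Phi> x - \<Phi> m + c * sqrt m + K \<le> \<alpha> * sqrt x" if m: "2*m > \<alpha> * sqrt x" "1 \<le> m" for m
  proof -
    have "\<alpha> * sqrt x / 2 \<le> m" using m by simp
    then have sq: "sqrt (\<alpha> * sqrt x / 2) \<le> sqrt m" by (rule real_sqrt_le_mono)
    have "\<alpha> * r > 0" using \<alpha>0 r0 by simp
    then have ac: "\<alpha> - c \<ge> 0" using \<alpha>r by linarith
    have "(\<alpha> - c) * sqrt (\<alpha> * sqrt x / 2) \<le> (\<alpha> - c) * sqrt m" using sq ac by (rule mult_left_mono)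
    then have h: "\<beta> * ln x + Kp \<le> (\<alpha> - c) * sqrt m" using E2 by linarith
    have "\<beta> * ln m \<ge> 0" using \<beta>0 m(2) by simp
    then show ?thesis unfolding \<Phi>_def using h KKp by (simp add: algebra_simps)
  qed
  have Nc: "\<Phi> m' + s \<le> \<Phi> m"
    if m: "2*m > \<alpha> * sqrt x" "1 \<le> m" and s: "0 \<le> s" "s \<le> c * sqrt m + K" and m': "1 \<le> m'" "m' \<le> 2*m/3 + s"
    for m s m'
  proof -
    note b = big[OF m]
    have s5: "s \<le> m / 5" using b s KKp by linarith
    have m'9: "m' \<le> (9/10) * m" using m' s5 by linarith
    have "ln m' \<le> ln ((9/10) * m)" using m'9 m' by simp
    also have "\<dots> = ln (9/10) + ln m" using m(2) by (intro ln_mult_pos) auto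
    also have "ln (9/10::real) \<le> 9/10 - 1" by (rule ln_le_minus_one) simp
    finally have lnm: "ln m' \<le> ln m - 1/10" by simp
    have blnm: "\<beta> * ln m' \<le> \<beta> * ln m - D"
    proof -
      have "\<beta> * ln m' \<le> \<beta> * (ln m - 1/10)" using lnm \<beta>0 by (rule mult_left_mono)
      then show ?thesis unfolding \<beta>_def by (simp add: algebra_simps)
    qed
    have sqm: "sqrt ((2/3) * m) = r * sqrt m" unfolding r_def by (rule real_sqrt_mult)
    have srm: "r * sqrt m > 0" using r0 m(2) by simp
    have "sqrt m' \<le> sqrt ((2/3) * m + s)" using m' by (intro real_sqrt_le_mono) simp
    also have "\<dots> \<le> sqrt ((2/3) * m) + s / (2 * sqrt ((2/3) * m))"
      by (rule sqrt_add_le) (use m(2) s(1) in auto)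
    also have "\<dots> = r * sqrt m + s / (2 * (r * sqrt m))" using sqm by simp
    finally have sm': "sqrt m' \<le> r * sqrt m + s / (2 * (r * sqrt m))" .
    have "s \<le> (c + Kp) * sqrt m"
    proof -
      have "Kp \<le> Kp * sqrt m" using b(2) Kp0 by (simp add: mult_left_mono[of 1 "sqrt m" Kp, simplified])
      then show ?thesis using s KKp by (simp add: algebra_simps)
    qed
    then have "s / (2 * (r * sqrt m)) \<le> (c + Kp) * sqrt m / (2 * (r * sqrt m))"
      using srm by (intro divide_right_mono) auto
    also have "\<dots> = (c + Kp) / (2 * r)" using r0 m(2) by (simp add: field_simps)
    finally have q: "s / (2 * (r * sqrt m)) \<le> (c + Kp) / (2 * r)" .
    have "\<alpha> * sqrt m' \<le> \<alpha> * (r * sqrt m + s / (2 * (r * sqrt m)))" using sm' \<alpha>0 by (intro mult_left_mono) auto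
    also have "\<dots> = \<alpha> * r * sqrt m + \<alpha> * (s / (2 * (r * sqrt m)))" by (simp add: algebra_simps)
    also have "\<alpha> * (s / (2 * (r * sqrt m))) \<le> \<alpha> * ((c + Kp) / (2 * r))" using q \<alpha>0 by (intro mult_left_mono) auto
    finally have a1: "\<alpha> * sqrt m' \<le> \<alpha> * r * sqrt m + \<alpha> * ((c + Kp) / (2 * r))" by simp
    have a2: "\<alpha> * ((c + Kp) / (2 * r)) = D - Kp" unfolding D_def by simp
    have a3: "\<alpha> * sqrt m = \<alpha> * r * sqrt m + c * sqrt m" using \<alpha>r by (metis distrib_right)
    have "\<alpha> * sqrt m' + s \<le> \<alpha> * sqrt m + D" using a1 a2 a3 s KKp by linarith
    then show ?thesis unfolding \<Phi>_def using blnm by simp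
  qed
  show ?thesis using Na Nb Nc by blast
qed


inductive red :: "nat set set \<Rightarrow> (nat set \<times> nat set) list \<Rightarrow> nat set set \<Rightarrow> bool" where
  red_nil: "red P [] P"
| red_cons: "A \<in> P \<Longrightarrow> B \<in> P \<Longrightarrow> A \<noteq> B \<Longrightarrow> red (insert (A \<union> B) (P - {A, B})) s Q \<Longrightarrow> red P ((A, B) # s) Q"

lemma red_append: "red P s Q \<Longrightarrow> red Q t R \<Longrightarrow> red P (s @ t) R"
  by (induction rule: red.induct) (auto intro: red.intros)

lemma red_valid_aux: "red P s Q \<Longrightarrow> card Q = 1 \<Longrightarrow> valid_steps P s"
  by (induction rule: red.induct) auto

lemma red_valid: "red P s {X} \<Longrightarrow> valid_steps P s"
  using red_valid_aux by fastforce

lemma red_shift: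
  "red P s Q \<Longrightarrow> (\<forall>b\<in>P. b \<noteq> {}) \<Longrightarrow> (\<forall>b\<in>R. b \<subseteq> U) \<Longrightarrow> \<Union>P \<inter> U = {} \<Longrightarrow> red (P \<union> R) s (Q \<union> R)"
proof (induction rule: red.induct)
  case (red_nil P)
  show ?case by (rule red.red_nil)
next
  case (red_cons A P B s Q)
  have AR: "A \<notin> R"
  proof
    assume "A \<in> R"
    then have "A \<subseteq> U" using red_cons.prems(2) by blast
    moreover have "A \<subseteq> \<Union>P" using red_cons.hyps(1) by blast
    ultimately show False using red_cons.prems(1,3) red_cons.hyps(1) by blast
  qed
  have BR: "B \<notin> R"
  proof
    assume "B \<in> R"
    then have "B \<subseteq> U" using red_cons.prems(2) by blast
    moreover have "B \<subseteq> \<Union>P" using red_cons.hyps(2) by blast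
    ultimately show False using red_cons.prems(1,3) red_cons.hyps(2) by blast
  qed
  have eq: "insert (A \<union> B) (P \<union> R - {A, B}) = insert (A \<union> B) (P - {A, B}) \<union> R"
    using AR BR by blast
  have ne: "\<forall>b\<in>insert (A \<union> B) (P - {A, B}). b \<noteq> {}" using red_cons.prems(1) red_cons.hyps(1) by blast
  have un: "\<Union>(insert (A \<union> B) (P - {A, B})) \<inter> U = {}" using red_cons.prems(3) red_cons.hyps(1,2) by blast
  have "red (insert (A \<union> B) (P - {A, B}) \<union> R) s (Q \<union> R)"
    using red_cons.IH[OF ne red_cons.prems(2) un] .
  then have "red (insert (A \<union> B) (P \<union> R - {A, B})) s (Q \<union> R)" using eq by simp
  then show ?case using red_cons.hyps(1-3) by (intro red.red_cons) auto
qed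

lemma red_steps_sub: "red P s Q \<Longrightarrow> st \<in> set s \<Longrightarrow> fst st \<union> snd st \<subseteq> \<Union>P"
proof (induction arbitrary: st rule: red.induct)
  case (red_nil P) then show ?case by simp
next
  case (red_cons A P B s Q)
  have eq: "\<Union>(insert (A \<union> B) (P - {A, B})) = \<Union>P" using red_cons.hyps(1,2) by blast
  show ?case
  proof (cases "st = (A,B)")
    case True then show ?thesis using red_cons.hyps(1,2) by auto
  next
    case False
    then have "st \<in> set s" using red_cons.prems by simp
    then show ?thesis using red_cons.IH eq by metis
  qed
qed

definition sing :: "nat set \<Rightarrow> nat set set" where "sing C = (\<lambda>v. {v}) ` C"

lemma red_combine:
  assumes "red (sing X) sx {X}" "red (sing Y) sy {Y}" "X \<inter> Y = {}" "X \<noteq> {}" "Y \<noteq> {}"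
  shows "red (sing (X \<union> Y)) (sx @ sy @ [(X,Y)]) {X \<union> Y}"
proof -
  have 1: "red (sing X \<union> sing Y) sx ({X} \<union> sing Y)"
    by (rule red_shift[OF assms(1), where U = Y]) (use assms(3) in \<open>auto simp: sing_def\<close>)
  have 2: "red (sing Y \<union> {X}) sy ({Y} \<union> {X})"
    by (rule red_shift[OF assms(2), where U = X]) (use assms(3) in \<open>auto simp: sing_def\<close>)
  have XY: "X \<noteq> Y" using assms(3,4) by blast
  have 3: "red ({Y} \<union> {X}) [(X,Y)] {X \<union> Y}"
  proof (rule red_cons)
    have eq: "insert (X \<union> Y) (({Y} \<union> {X}) - {X, Y}) = {X \<union> Y}" by auto
    show "red (insert (X \<union> Y) ({Y} \<union> {X} - {X, Y})) [] {X \<union> Y}" unfolding eq by (rule red_nil)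
  qed (use XY in auto)
  have "red (sing X \<union> sing Y) (sx @ sy @ [(X,Y)]) {X \<union> Y}"
    using red_append[OF 1 red_append[OF _ 3]] 2 by (simp add: Un_commute)
  then show ?thesis by (simp add: sing_def image_Un)
qed

lemma red_trivial:
  assumes "finite C" "C \<noteq> {}"
  shows "\<exists>s. red (sing C) s {C} \<and> length s = card C - 1"
  using assms
proof (induction rule: finite_ne_induct)
  case (singleton x)
  then show ?case by (intro exI[of _ "[]"]) (simp add: sing_def red_nil)
next
  case (insert x F)
  then obtain s where s: "red (sing F) s {F}" "length s = card F - 1" by blast
  have "red (sing (F \<union> {x})) (s @ [] @ [(F,{x})]) {F \<union> {x}}"
    by (rule red_combine[OF s(1)]) (use insert in \<open>auto simp: sing_def red_nil\<close>)
  moreover have "card (insert x F) = card F + 1" using insert by simp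
  moreover have "card F \<ge> 1" using insert by (simp add: Suc_leI card_gt_0_iff)
  ultimately show ?case using s(2) by (intro exI[of _ "s @ [(F,{x})]"]) auto
qed


lemma card_two_Int: "a \<noteq> b \<Longrightarrow> card ({a,b} \<inter> Z) = 1 \<longleftrightarrow> ((a \<in> Z) \<noteq> (b \<in> Z))"
  by (cases "a \<in> Z"; cases "b \<in> Z") (auto simp: Int_insert_left)

locale TN =
  fixes n :: nat and E :: "nat set" and ends :: "nat \<Rightarrow> nat set" and d :: "nat \<Rightarrow> nat" and M :: nat
  assumes tn: "tensor_network n E ends d M"
begin

lemma finE: "finite E" using tn by (simp add: tensor_network_def)
lemma ends_sub: "e \<in> E \<Longrightarrow> ends e \<subseteq> {..<n}" using tn by (simp add: tensor_network_def)
lemma card_ends: "e \<in> E \<Longrightarrow> card (ends e) = 2" using tn by (simp add: tensor_network_def)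
lemma d_pos: "e \<in> E \<Longrightarrow> d e \<ge> 1" using tn by (simp add: tensor_network_def)
lemma entries_le: "v < n \<Longrightarrow> (\<Prod>e\<in>{e\<in>E. v \<in> ends e}. d e) \<le> M"
  using tn by (simp add: tensor_network_def tensor_entries_def)

lemma ends_two: "e \<in> E \<Longrightarrow> \<exists>a b. a \<noteq> b \<and> ends e = {a,b}"
proof -
  assume "e \<in> E"
  then obtain x y where "ends e = {x, y}" "x \<noteq> y" using card_ends[of e] card_2_iff[of "ends e"] by blast
  then show ?thesis by blast
qed

lemma prod_mono_sub: "F \<subseteq> G \<Longrightarrow> G \<subseteq> E \<Longrightarrow> (\<Prod>e\<in>F. d e) \<le> (\<Prod>e\<in>G. d e)"
proof -
  assume FG: "F \<subseteq> G" and GE: "G \<subseteq> E"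
  have fG: "finite G" using GE finE finite_subset by blast
  have "(\<Prod>e\<in>G. d e) = (\<Prod>e\<in>G - F. d e) * (\<Prod>e\<in>F. d e)"
    using prod.subset_diff[OF FG fG] by simp
  moreover have "(\<Prod>e\<in>G - F. d e) \<ge> 1" using GE d_pos by (intro prod_ge_1) auto
  ultimately show ?thesis by simp
qed

lemma prod_Un_le: "F \<subseteq> E \<Longrightarrow> G \<subseteq> E \<Longrightarrow> (\<Prod>e\<in>F \<union> G. d e) \<le> (\<Prod>e\<in>F. d e) * (\<Prod>e\<in>G. d e)"
proof -
  assume FE: "F \<subseteq> E" and GE: "G \<subseteq> E"
  have f: "finite F" "finite G" using FE GE finE finite_subset by blast+
  have "(\<Prod>e\<in>F \<union> G. d e) * (\<Prod>e\<in>F \<inter> G. d e) = (\<Prod>e\<in>F. d e) * (\<Prod>e\<in>G. d e)"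
    using prod.union_inter[OF f] by simp
  moreover have "(\<Prod>e\<in>F \<inter> G. d e) \<ge> 1" using FE d_pos by (intro prod_ge_1) auto
  ultimately show ?thesis by (metis le_square mult_le_mono2 nat_mult_1_right order_trans mult_le_cancel1 le_refl linorder_not_le mult.commute mult_le_mono1 not_one_le_zero)
qed

lemma touch:
  assumes "finite T"
  shows "T \<subseteq> {..<n} \<Longrightarrow> F \<subseteq> E \<Longrightarrow> \<forall>e\<in>F. ends e \<inter> T \<noteq> {} \<Longrightarrow> (\<Prod>e\<in>F. d e) \<le> M ^ card T"
  using assms
proof (induction T arbitrary: F rule: finite_induct)
  case empty
  then have "F = {}" by auto
  then show ?case by simp
next
  case (insert v T)
  define F1 where "F1 = {e\<in>F. v \<in> ends e}"
  have f: "finite F" using insert.prems(2) finE finite_subset by blast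
  have F1F: "F1 \<subseteq> F" unfolding F1_def by auto
  have "(\<Prod>e\<in>F. d e) = (\<Prod>e\<in>F - F1. d e) * (\<Prod>e\<in>F1. d e)"
    using prod.subset_diff[OF F1F f] by simp
  moreover have "(\<Prod>e\<in>F1. d e) \<le> M"
  proof -
    have "(\<Prod>e\<in>F1. d e) \<le> (\<Prod>e\<in>{e\<in>E. v \<in> ends e}. d e)"
      by (rule prod_mono_sub) (use insert.prems(2) in \<open>auto simp: F1_def\<close>)
    also have "\<dots> \<le> M" using entries_le insert.prems(1) by auto
    finally show ?thesis .
  qed
  moreover have "(\<Prod>e\<in>F - F1. d e) \<le> M ^ card T"
    by (rule insert.IH) (use insert.prems in \<open>auto simp: F1_def\<close>)
  ultimately have "(\<Prod>e\<in>F. d e) \<le> M ^ card T * M" by (simp add: mult_le_mono)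
  then show ?case using insert.hyps by (simp add: mult.commute)
qed

definition opn :: "nat set \<Rightarrow> nat set" where "opn C = open_indices E ends C"
definition wt :: "nat set \<Rightarrow> nat" where "wt C = (\<Prod>e\<in>opn C. d e)"
definition ESY :: "nat set \<Rightarrow> nat set \<Rightarrow> nat set" where
  "ESY S Y = {e\<in>E. ends e \<inter> S \<noteq> {} \<and> ends e \<inter> Y \<noteq> {}}"

lemma opn_E: "opn C \<subseteq> E" by (auto simp: opn_def open_indices_def)

lemma opn_meets: "e \<in> opn C \<Longrightarrow> ends e \<inter> C \<noteq> {}"
  by (auto simp: opn_def open_indices_def)

lemma opn_V: "opn {..<n} = {}"
proof -
  have "card (ends e \<inter> {..<n}) = 2" if "e \<in> E" for e
    using ends_sub[OF that] card_ends[OF that] by (simp add: Int_absorb2)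
  then show ?thesis by (auto simp: opn_def open_indices_def)
qed

lemma wt_V: "wt {..<n} = 1" by (simp add: wt_def opn_V)

lemma open_part:
  assumes "C1 \<inter> C2 = {}" "e \<in> opn C1"
  shows "e \<in> opn (C1 \<union> C2) \<or> (ends e \<inter> C1 \<noteq> {} \<and> ends e \<inter> C2 \<noteq> {})"
proof -
  have eE: "e \<in> E" using assms(2) opn_E by blast
  obtain a b where ab: "a \<noteq> b" "ends e = {a,b}" using ends_two[OF eE] by blast
  have "(a \<in> C1) \<noteq> (b \<in> C1)" using assms(2) ab card_two_Int[OF ab(1), of C1]
    by (auto simp: opn_def open_indices_def)
  then show ?thesis using ab eE assms(1) card_two_Int[OF ab(1), of "C1 \<union> C2"]
    by (auto simp: opn_def open_indices_def)
qed

lemma trivial_bound: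
  assumes "X \<union> Y \<subseteq> C" "C \<subseteq> {..<n}"
  shows "(\<Prod>e\<in>opn X \<union> opn Y. d e) \<le> M ^ card C"
proof -
  have fC: "finite C" using assms(2) finite_subset by blast
  have "(\<Prod>e\<in>opn X \<union> opn Y. d e) \<le> M ^ card C"
    by (rule touch[OF fC assms(2)]) (use opn_E opn_meets assms(1) in blast)+
  then show ?thesis .
qed

end


context TN begin

lemma ES_disj:
  assumes "S \<inter> X = {}" "S \<inter> Y = {}" "X \<inter> Y = {}"
  shows "ESY S X \<inter> ESY S Y = {}"
proof (rule ccontr)
  assume "ESY S X \<inter> ESY S Y \<noteq> {}"
  then obtain e where e: "e \<in> E" "ends e \<inter> S \<noteq> {}" "ends e \<inter> X \<noteq> {}" "ends e \<inter> Y \<noteq> {}"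
    unfolding ESY_def by blast
  obtain a b where ab: "a \<noteq> b" "ends e = {a,b}" using ends_two[OF e(1)] by blast
  show False using e(2-4) ab(2) assms by auto
qed

lemma ES_prod:
  assumes "S \<subseteq> {..<n}" "S \<inter> X = {}" "S \<inter> Y = {}" "X \<inter> Y = {}"
  shows "(\<Prod>e\<in>ESY S X. d e) * (\<Prod>e\<in>ESY S Y. d e) \<le> M ^ card S"
proof -
  have f: "finite (ESY S X)" "finite (ESY S Y)" using finE by (auto simp: ESY_def)
  have "(\<Prod>e\<in>ESY S X. d e) * (\<Prod>e\<in>ESY S Y. d e) = (\<Prod>e\<in>ESY S X \<union> ESY S Y. d e)"
    using prod.union_disjoint[OF f ES_disj[OF assms(2-4)], of d] by simp
  also have "\<dots> \<le> M ^ card S"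
    by (rule touch) (use assms(1) finite_subset in \<open>auto simp: ESY_def\<close>)
  finally show ?thesis .
qed

lemma ends_in_union:
  assumes "e \<in> E" "ends e \<inter> C1 \<noteq> {}" "ends e \<inter> C2 \<noteq> {}" "C1 \<inter> C2 = {}"
  shows "ends e \<subseteq> C1 \<union> C2"
proof -
  obtain a b where ab: "a \<noteq> b" "ends e = {a,b}" using ends_two[OF assms(1)] by blast
  show ?thesis using assms(2-4) ab by auto
qed

lemma split_open:
  assumes part: "S \<union> X \<union> Y = C" "S \<inter> X = {}" "S \<inter> Y = {}" "X \<inter> Y = {}"
    and noXY: "\<forall>e\<in>E. ends e \<subseteq> C \<longrightarrow> \<not> (ends e \<inter> X \<noteq> {} \<and> ends e \<inter> Y \<noteq> {})"
  shows "opn (X \<union> S) \<union> opn Y \<subseteq> opn C \<union> ESY S Y"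
proof
  fix e assume e: "e \<in> opn (X \<union> S) \<union> opn Y"
  have eE: "e \<in> E" using e opn_E by blast
  have d1: "(X \<union> S) \<inter> Y = {}" using part by blast
  have C1: "(X \<union> S) \<union> Y = C" "Y \<union> (X \<union> S) = C" using part(1) by blast+
  have "e \<in> opn C \<or> (ends e \<inter> (X \<union> S) \<noteq> {} \<and> ends e \<inter> Y \<noteq> {})"
  proof (cases "e \<in> opn (X \<union> S)")
    case True
    then show ?thesis using open_part[OF d1 True] C1 by simp
  next
    case False
    then have "e \<in> opn Y" using e by blast
    then show ?thesis using open_part[of Y "X \<union> S" e] d1 C1 by (simp add: Int_commute) blast
  qed
  then show "e \<in> opn C \<union> ESY S Y"
  proof
    assume h: "ends e \<inter> (X \<union> S) \<noteq> {} \<and> ends e \<inter> Y \<noteq> {}"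
    then have "ends e \<subseteq> C" using ends_in_union[OF eE _ _ d1] C1 by blast
    then have "\<not> (ends e \<inter> X \<noteq> {} \<and> ends e \<inter> Y \<noteq> {})" using noXY eE by blast
    then have "ends e \<inter> S \<noteq> {}" using h by blast
    then show ?thesis using h eE by (auto simp: ESY_def)
  qed simp
qed

definition good :: "real \<Rightarrow> nat set \<Rightarrow> (nat set \<times> nat set) list \<Rightarrow> bool" where
  "good L C s \<longleftrightarrow> red (sing C) s {C} \<and> length s = card C - 1 \<and>
     (\<forall>st\<in>set s. real (\<Prod>e\<in>opn (fst st) \<union> opn (snd st). d e)^2 \<le> real M powr L)"

lemma wt_split:
  assumes "opn C' \<subseteq> opn C \<union> ESY S Y"
  shows "wt C' \<le> wt C * (\<Prod>e\<in>ESY S Y. d e)"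
proof -
  have "wt C' \<le> (\<Prod>e\<in>opn C \<union> ESY S Y. d e)" unfolding wt_def
    by (rule prod_mono_sub[OF assms]) (use opn_E in \<open>auto simp: ESY_def\<close>)
  also have "\<dots> \<le> wt C * (\<Prod>e\<in>ESY S Y. d e)" unfolding wt_def
    by (rule prod_Un_le) (use opn_E in \<open>auto simp: ESY_def\<close>)
  finally show ?thesis .
qed

lemma sq_bound:
  assumes "x \<le> y * p" "real y ^ 2 \<le> real M powr b" "real p ^ 2 \<le> real M powr s"
  shows "real x ^ 2 \<le> real M powr (b + s)"
proof -
  have "real x ^ 2 \<le> (real y * real p) ^ 2"
    using assms(1) by (metis of_nat_0_le_iff of_nat_le_iff of_nat_mult power_mono)
  also have "\<dots> = real y ^ 2 * real p ^ 2" by (simp add: power_mult_distrib)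
  also have "\<dots> \<le> real M powr b * real M powr s"
    using assms(2,3) by (intro mult_mono) auto
  also have "\<dots> = real M powr (b + s)" by (simp add: powr_add)
  finally show ?thesis .
qed

end


context TN begin

lemma rec_step:
  fixes L b c K \<Omega> :: real and \<Phi> :: "real \<Rightarrow> real"
  assumes IH: "\<And>C' b'. card C' < card C \<Longrightarrow> C' \<subseteq> {..<n} \<Longrightarrow> C' \<noteq> {} \<Longrightarrow>
        real (wt C')^2 \<le> real M powr b' \<Longrightarrow> b' + \<Phi> (real (card C')) \<le> \<Omega> \<Longrightarrow> \<exists>s. good L C' s"
    and CV: "C \<subseteq> {..<n}" and Cne: "C \<noteq> {}"
    and part: "S \<union> X \<union> Y = C" "S \<inter> X = {}" "S \<inter> Y = {}" "X \<inter> Y = {}"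
    and noXY: "\<forall>e\<in>E. ends e \<subseteq> C \<longrightarrow> \<not> (ends e \<inter> X \<noteq> {} \<and> ends e \<inter> Y \<noteq> {})"
    and cX: "real (card X) \<le> 2 * real (card C) / 3" and cY: "real (card Y) \<le> 2 * real (card C) / 3"
    and cS: "real (card S) \<le> c * sqrt (real (card C)) + K"
    and small: "c * sqrt (real (card C)) + K < real (card C) / 3"
    and hES: "real (\<Prod>e\<in>ESY S Y. d e) ^ 2 \<le> real M powr real (card S)"
    and W: "real (wt C)^2 \<le> real M powr b" and pot: "b + \<Phi> (real (card C)) \<le> \<Omega>"
    and Nb: "\<Omega> - \<Phi> (real (card C)) + c * sqrt (real (card C)) + K \<le> L"
    and Nc: "\<And>m'. 1 \<le> m' \<Longrightarrow> m' \<le> 2 * real (card C) / 3 + real (card S) \<Longrightarrow> \<Phi> m' + real (card S) \<le> \<Phi> (real (card C))"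
  shows "\<exists>s. good L C s"
proof -
  define C1 where "C1 = X \<union> S"
  have fC: "finite C" using CV finite_subset by blast
  have sub3: "S \<subseteq> C" "X \<subseteq> C" "Y \<subseteq> C" using part(1) by blast+
  have fin: "finite S" "finite X" "finite Y" using finite_subset[OF sub3(1) fC] finite_subset[OF sub3(2) fC] finite_subset[OF sub3(3) fC] by simp_all
  have c1: "card (S \<union> X) = card S + card X" using card_Un_disjoint[OF fin(1,2) part(2)] .
  have d3: "(S \<union> X) \<inter> Y = {}" using part(3,4) by blast
  have c2: "card (S \<union> X \<union> Y) = card (S \<union> X) + card Y" using card_Un_disjoint[OF _ fin(3) d3] fin by simp
  have cC: "card C = card X + card S + card Y" using c1 c2 part(1) by simp
  have cC1: "card C1 = card X + card S" unfolding C1_def using c1 by (simp add: Un_commute)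
  have C1Y: "C1 \<inter> Y = {}" "C1 \<union> Y = C" unfolding C1_def using part by blast+
  have m1: "card C \<ge> 1" using Cne fC by (simp add: Suc_le_eq card_gt_0_iff)
  have rcC: "real (card C) = real (card X) + real (card S) + real (card Y)" using cC by simp
  have rcC1: "real (card C1) = real (card X) + real (card S)" using cC1 by simp
  have rm1: "real (card C) \<ge> 1" using m1 by simp
  have "real (card Y) > 0" using rcC cX cS small by linarith
  then have Ypos: "card Y > 0" by simp
  have "real (card C1) > 0" using rcC rcC1 cY rm1 by linarith
  then have C1pos: "card C1 > 0" by simp
  have lt1: "card C1 < card C" using cC cC1 Ypos by simp
  have lt2: "card Y < card C" using cC cC1 C1pos by simp
  have C1V: "C1 \<subseteq> {..<n}" "Y \<subseteq> {..<n}" using C1Y CV by blast+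
  have ne: "C1 \<noteq> {}" "Y \<noteq> {}" using C1pos Ypos by auto
  have so: "opn C1 \<union> opn Y \<subseteq> opn C \<union> ESY S Y" unfolding C1_def by (rule split_open[OF part noXY])
  define P where "P = (\<Prod>e\<in>ESY S Y. d e)"
  have o1: "opn C1 \<subseteq> opn C \<union> ESY S Y" "opn Y \<subseteq> opn C \<union> ESY S Y" using so by blast+
  have w1: "real (wt C1)^2 \<le> real M powr (b + real (card S))"
    by (rule sq_bound[OF wt_split[OF o1(1)] W hES])
  have w2: "real (wt Y)^2 \<le> real M powr (b + real (card S))"
    by (rule sq_bound[OF wt_split[OF o1(2)] W hES])
  have p1: "b + real (card S) + \<Phi> (real (card C1)) \<le> \<Omega>"
    using Nc[of "real (card C1)"] C1pos rcC1 cX pot by linarith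
  have p2: "b + real (card S) + \<Phi> (real (card Y)) \<le> \<Omega>"
    using Nc[of "real (card Y)"] Ypos cY pot by linarith
  obtain s1 where s1: "good L C1 s1" using IH[OF lt1 C1V(1) ne(1) w1 p1] by blast
  obtain s2 where s2: "good L Y s2" using IH[OF lt2 C1V(2) ne(2) w2 p2] by blast
  have r: "red (sing C) (s1 @ s2 @ [(C1, Y)]) {C}"
    using red_combine[of C1 s1 Y s2] s1 s2 C1Y ne unfolding good_def by simp
  have len: "length (s1 @ s2 @ [(C1, Y)]) = card C - 1"
  proof -
    have l1: "length s1 = card C1 - 1" and l2: "length s2 = card Y - 1" using s1 s2 unfolding good_def by auto
    have "length (s1 @ s2 @ [(C1, Y)]) = length s1 + length s2 + 1" by simp
    also have "\<dots> = card C - 1" using l1 l2 cC cC1 C1pos Ypos by arith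
    finally show ?thesis .
  qed
  have last: "real (\<Prod>e\<in>opn C1 \<union> opn Y. d e)^2 \<le> real M powr L"
  proof -
    have "(\<Prod>e\<in>opn C1 \<union> opn Y. d e) \<le> wt C * P"
    proof -
      have "(\<Prod>e\<in>opn C1 \<union> opn Y. d e) \<le> (\<Prod>e\<in>opn C \<union> ESY S Y. d e)"
        by (rule prod_mono_sub[OF so]) (use opn_E in \<open>auto simp: ESY_def\<close>)
      also have "\<dots> \<le> wt C * P" unfolding wt_def P_def
        by (rule prod_Un_le) (use opn_E in \<open>auto simp: ESY_def\<close>)
      finally show ?thesis .
    qed
    then have "real (\<Prod>e\<in>opn C1 \<union> opn Y. d e)^2 \<le> real M powr (b + real (card S))"
      unfolding P_def by (rule sq_bound[OF _ W hES])
    also have "\<dots> \<le> real M powr L"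
    proof (cases "M = 0")
      case True then show ?thesis by simp
    next
      case False
      have "b + real (card S) \<le> L" using pot cS Nb by linarith
      then show ?thesis using False by (intro powr_mono) auto
    qed
    finally show ?thesis .
  qed
  have "good L C (s1 @ s2 @ [(C1, Y)])"
    unfolding good_def using r len last s1 s2 unfolding good_def by auto
  then show ?thesis by blast
qed

end


context TN begin

definition sepP :: "real \<Rightarrow> real \<Rightarrow> bool" where
  "sepP c K \<longleftrightarrow> (\<forall>C. C \<subseteq> {..<n} \<longrightarrow> (\<exists>S A B. S \<union> A \<union> B = C \<and> S \<inter> A = {} \<and> S \<inter> B = {} \<and> A \<inter> B = {}
     \<and> real (card A) \<le> 2 * real (card C) / 3 \<and> real (card B) \<le> 2 * real (card C) / 3
     \<and> real (card S) \<le> c * sqrt (real (card C)) + K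
     \<and> (\<forall>e\<in>E. ends e \<subseteq> C \<longrightarrow> \<not> (ends e \<inter> A \<noteq> {} \<and> ends e \<inter> B \<noteq> {}))))"

lemma sq_pow: "M \<ge> 1 \<Longrightarrow> x \<le> M ^ k \<Longrightarrow> real x ^ 2 \<le> real M powr (2 * real k)"
proof -
  assume M1: "M \<ge> 1" and x: "x \<le> M ^ k"
  have "real x ^ 2 \<le> real (M ^ k) ^ 2" using x by (simp add: power_mono)
  also have "\<dots> = real M ^ (2 * k)" by (simp add: power_mult[symmetric] mult.commute)
  also have "\<dots> = real M powr (2 * real k)" using M1 by (simp add: powr_realpow[symmetric])
  finally show ?thesis .
qed

lemma rec:
  fixes L c K \<Omega> b :: real and \<Phi> :: "real \<Rightarrow> real"
  assumes sep: "sepP c K" and M2: "M \<ge> 2"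
    and Na: "\<And>m. 2*m > L \<Longrightarrow> 1 \<le> m \<Longrightarrow> c * sqrt m + K < m / 3"
    and Nb: "\<And>m. 2*m > L \<Longrightarrow> 1 \<le> m \<Longrightarrow> \<Omega> - \<Phi> m + c * sqrt m + K \<le> L"
    and Nc: "\<And>m s m'. 2*m > L \<Longrightarrow> 1 \<le> m \<Longrightarrow> 0 \<le> s \<Longrightarrow> s \<le> c * sqrt m + K \<Longrightarrow> 1 \<le> m' \<Longrightarrow>
               m' \<le> 2*m/3 + s \<Longrightarrow> \<Phi> m' + s \<le> \<Phi> m"
  shows "C \<subseteq> {..<n} \<Longrightarrow> C \<noteq> {} \<Longrightarrow> real (wt C)^2 \<le> real M powr b \<Longrightarrow> b + \<Phi> (real (card C)) \<le> \<Omega>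
         \<Longrightarrow> \<exists>s. good L C s"
proof (induction "card C" arbitrary: C b rule: less_induct)
  case less
  have fC: "finite C" using less.prems(1) finite_subset by blast
  have m1: "card C \<ge> 1" using less.prems(2) fC by (simp add: Suc_le_eq card_gt_0_iff)
  have M1: "M \<ge> 1" using M2 by simp
  show ?case
  proof (cases "2 * real (card C) \<le> L")
    case True
    obtain s where s: "red (sing C) s {C}" "length s = card C - 1"
      using red_trivial[OF fC less.prems(2)] by blast
    have "real (\<Prod>e\<in>opn (fst st) \<union> opn (snd st). d e)^2 \<le> real M powr L" if st: "st \<in> set s" for st
    proof -
      have "fst st \<union> snd st \<subseteq> \<Union>(sing C)" by (rule red_steps_sub[OF s(1) st])
      then have sub: "fst st \<union> snd st \<subseteq> C" by (simp add: sing_def)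
      have "real (\<Prod>e\<in>opn (fst st) \<union> opn (snd st). d e)^2 \<le> real M powr (2 * real (card C))"
        by (rule sq_pow[OF M1 trivial_bound[OF sub less.prems(1)]])
      also have "\<dots> \<le> real M powr L" using True M1 by (intro powr_mono) auto
      finally show ?thesis .
    qed
    then have "good L C s" using s unfolding good_def by blast
    then show ?thesis by blast
  next
    case False
    then have L': "2 * real (card C) > L" by simp
    have rm1: "1 \<le> real (card C)" using m1 by simp
    obtain S A B where SAB: "S \<union> A \<union> B = C" "S \<inter> A = {}" "S \<inter> B = {}" "A \<inter> B = {}"
      "real (card A) \<le> 2 * real (card C) / 3" "real (card B) \<le> 2 * real (card C) / 3"
      "real (card S) \<le> c * sqrt (real (card C)) + K"
      "\<forall>e\<in>E. ends e \<subseteq> C \<longrightarrow> \<not> (ends e \<inter> A \<noteq> {} \<and> ends e \<inter> B \<noteq> {})"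
      by (insert sep less.prems(1), unfold sepP_def, drule spec[of _ C], drule mp, assumption, elim exE conjE, rule that, assumption+)
    have SV: "S \<subseteq> {..<n}" using SAB(1) less.prems(1) by blast
    define Pa where "Pa = (\<Prod>e\<in>ESY S A. d e)"
    define Pb where "Pb = (\<Prod>e\<in>ESY S B. d e)"
    have PP: "Pa * Pb \<le> M ^ card S" unfolding Pa_def Pb_def by (rule ES_prod[OF SV SAB(2-4)])
    have PPr: "real (Pa * Pb) \<le> real M powr real (card S)"
    proof -
      have "real (Pa * Pb) \<le> real (M ^ card S)" using PP by (simp only: of_nat_le_iff)
      also have "\<dots> = real M powr real (card S)" using M1 by (simp add: powr_realpow)
      finally show ?thesis .
    qed
    have small: "c * sqrt (real (card C)) + K < real (card C) / 3" by (rule Na[OF L' rm1])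
    have Nb': "\<Omega> - \<Phi> (real (card C)) + c * sqrt (real (card C)) + K \<le> L" by (rule Nb[OF L' rm1])
    have Nc': "\<Phi> m' + real (card S) \<le> \<Phi> (real (card C))"
      if "1 \<le> m'" "m' \<le> 2 * real (card C) / 3 + real (card S)" for m'
      by (rule Nc[OF L' rm1 _ SAB(7) that]) simp
    show ?thesis
    proof (cases "Pb \<le> Pa")
      case True
      have "real Pb ^ 2 \<le> real (Pa * Pb)" using True by (simp add: power2_eq_square mult_right_mono)
      then have hES: "real (\<Prod>e\<in>ESY S B. d e) ^ 2 \<le> real M powr real (card S)" using PPr Pb_def by simp
      show ?thesis
        by (rule rec_step[where \<Phi>=\<Phi> and \<Omega>=\<Omega> and L=L and C=C and b=b and c=c and K=K, OF less.hyps less.prems(1,2) SAB(1-4) SAB(8) SAB(5,6,7) small hES less.prems(3,4) Nb' Nc'])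
    next
      case False
      have "real Pa ^ 2 \<le> real (Pa * Pb)" using False by (simp add: power2_eq_square mult_left_mono)
      then have hES: "real (\<Prod>e\<in>ESY S A. d e) ^ 2 \<le> real M powr real (card S)" using PPr Pa_def by simp
      have part': "S \<union> B \<union> A = C" "B \<inter> A = {}" using SAB(1,4) by blast+
      have noBA: "\<forall>e\<in>E. ends e \<subseteq> C \<longrightarrow> \<not> (ends e \<inter> B \<noteq> {} \<and> ends e \<inter> A \<noteq> {})" using SAB(8) by blast
      show ?thesis
        by (rule rec_step[where \<Phi>=\<Phi> and \<Omega>=\<Omega> and L=L and C=C and b=b and c=c and K=K, OF less.hyps less.prems(1,2) part'(1) SAB(3,2) part'(2) noBA SAB(6,5,7) small hES less.prems(3,4) Nb' Nc'])
    qed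
  qed
qed

end


lemma planar_sub:
  assumes "planar_graph V Eg" "V' \<subseteq> V" "Eg' \<subseteq> Eg" "\<forall>e\<in>Eg'. e \<subseteq> V'"
  shows "planar_graph V' Eg'"
proof -
  have ex: "\<exists>(p :: 'a \<Rightarrow> complex) (\<gamma> :: 'a set \<Rightarrow> real \<Rightarrow> complex). inj_on p V \<and>
    (\<forall>e\<in>Eg. arc (\<gamma> e) \<and> {pathstart (\<gamma> e), pathfinish (\<gamma> e)} = p ` e \<and> path_image (\<gamma> e) \<inter> p ` V = p ` e) \<and>
    (\<forall>e\<in>Eg. \<forall>f\<in>Eg. e \<noteq> f \<longrightarrow> path_image (\<gamma> e) \<inter> path_image (\<gamma> f) = p ` (e \<inter> f))"
    using assms(1) unfolding planar_graph_def .
  then obtain p where "\<exists>(\<gamma> :: 'a set \<Rightarrow> real \<Rightarrow> complex). inj_on p V \<and>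
    (\<forall>e\<in>Eg. arc (\<gamma> e) \<and> {pathstart (\<gamma> e), pathfinish (\<gamma> e)} = p ` e \<and> path_image (\<gamma> e) \<inter> p ` V = p ` e) \<and>
    (\<forall>e\<in>Eg. \<forall>f\<in>Eg. e \<noteq> f \<longrightarrow> path_image (\<gamma> e) \<inter> path_image (\<gamma> f) = p ` (e \<inter> f))" ..
  then obtain \<gamma> where P0: "inj_on p V \<and>
    (\<forall>e\<in>Eg. arc (\<gamma> e) \<and> {pathstart (\<gamma> e), pathfinish (\<gamma> e)} = p ` e \<and> path_image (\<gamma> e) \<inter> p ` V = p ` e) \<and>
    (\<forall>e\<in>Eg. \<forall>f\<in>Eg. e \<noteq> f \<longrightarrow> path_image (\<gamma> e) \<inter> path_image (\<gamma> f) = p ` (e \<inter> f))" ..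
  note P = conjunct1[OF P0] conjunct1[OF conjunct2[OF P0]] conjunct2[OF conjunct2[OF P0]]
  have "inj_on p V'" using P(1) assms(2) inj_on_subset by blast
  moreover have "\<forall>e\<in>Eg'. arc (\<gamma> e) \<and> {pathstart (\<gamma> e), pathfinish (\<gamma> e)} = p ` e \<and> path_image (\<gamma> e) \<inter> p ` V' = p ` e"
  proof
    fix e assume e: "e \<in> Eg'"
    then have eE: "e \<in> Eg" using assms(3) by blast
    have "path_image (\<gamma> e) \<inter> p ` V' = (path_image (\<gamma> e) \<inter> p ` V) \<inter> p ` V'" using assms(2) by blast
    also have "\<dots> = p ` e \<inter> p ` V'" using P(2) eE by simp
    also have "\<dots> = p ` e" using assms(4) e by blast
    finally show "arc (\<gamma> e) \<and> {pathstart (\<gamma> e), pathfinish (\<gamma> e)} = p ` e \<and> path_image (\<gamma> e) \<inter> p ` V' = p ` e"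
      using P(2) eE by simp
  qed
  moreover have "\<forall>e\<in>Eg'. \<forall>f\<in>Eg'. e \<noteq> f \<longrightarrow> path_image (\<gamma> e) \<inter> path_image (\<gamma> f) = p ` (e \<inter> f)"
    using P(3) assms(3) by blast
  ultimately show ?thesis unfolding planar_graph_def by (intro exI[of _ p] exI[of _ \<gamma>] conjI)
qed

lemma steps_cost_le:
  "(\<forall>st\<in>set s. real (pair_cost E ends d (fst st) (snd st)) \<le> B) \<Longrightarrow>
    real (steps_cost E ends d s) \<le> real (length s) * B"
proof (induction s)
  case Nil then show ?case by simp
next
  case (Cons st s)
  obtain X Y where st: "st = (X, Y)" by (cases st)
  have "real (steps_cost E ends d (st # s)) = real (pair_cost E ends d X Y) + real (steps_cost E ends d s)"
    by (simp add: st)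
  also have "\<dots> \<le> B + real (length s) * B" using Cons st by (intro add_mono) auto
  finally show ?case by (simp add: algebra_simps)
qed

context TN begin

lemma sepP_from:
  assumes K: "\<forall>(V :: nat set) Eg. simple_graph V Eg \<and> planar_graph V Eg \<longrightarrow>
        (\<exists>S A B. S \<union> A \<union> B = V \<and> S \<inter> A = {} \<and> S \<inter> B = {} \<and> A \<inter> B = {}
           \<and> real (card A) \<le> 2 * real (card V) / 3 \<and> real (card B) \<le> 2 * real (card V) / 3
           \<and> real (card S) \<le> c * sqrt (real (card V)) + K
           \<and> (\<forall>e\<in>Eg. \<not> (e \<inter> A \<noteq> {} \<and> e \<inter> B \<noteq> {})))"
    and pl: "planar_graph {..<n} (underlying_edges E ends)"
  shows "sepP c K"
  unfolding sepP_def
proof (intro allI impI)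
  fix C assume CV: "C \<subseteq> {..<n}"
  define Eg where "Eg = {f \<in> ends ` E. f \<subseteq> C}"
  have sg: "simple_graph C Eg" unfolding simple_graph_def
  proof (intro conjI)
    show "finite C" using CV finite_subset by blast
    show "\<forall>f\<in>Eg. f \<subseteq> C \<and> card f = 2"
    proof
      fix f assume "f \<in> Eg"
      then obtain e where "e \<in> E" "f = ends e" "f \<subseteq> C" unfolding Eg_def by blast
      then show "f \<subseteq> C \<and> card f = 2" using card_ends by simp
    qed
  qed
  have pg: "planar_graph C Eg"
    by (rule planar_sub[OF pl CV]) (auto simp: Eg_def underlying_edges_def)
  note ex = K[rule_format, OF conjI[OF sg pg]]
  obtain S A B where SAB: "S \<union> A \<union> B = C" "S \<inter> A = {}" "S \<inter> B = {}" "A \<inter> B = {}"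
           "real (card A) \<le> 2 * real (card C) / 3" "real (card B) \<le> 2 * real (card C) / 3"
           "real (card S) \<le> c * sqrt (real (card C)) + K"
           "\<forall>e\<in>Eg. \<not> (e \<inter> A \<noteq> {} \<and> e \<inter> B \<noteq> {})"
    by (insert ex, elim exE conjE, rule that, assumption+)
  have "\<forall>e\<in>E. ends e \<subseteq> C \<longrightarrow> \<not> (ends e \<inter> A \<noteq> {} \<and> ends e \<inter> B \<noteq> {})"
  proof (intro ballI impI)
    fix e assume "e \<in> E" "ends e \<subseteq> C"
    then have "ends e \<in> Eg" unfolding Eg_def by blast
    then show "\<not> (ends e \<inter> A \<noteq> {} \<and> ends e \<inter> B \<noteq> {})" using SAB(8) by blast
  qed
  then show "\<exists>S A B. S \<union> A \<union> B = C \<and> S \<inter> A = {} \<and> S \<inter> B = {} \<and> A \<inter> B = {}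
     \<and> real (card A) \<le> 2 * real (card C) / 3 \<and> real (card B) \<le> 2 * real (card C) / 3
     \<and> real (card S) \<le> c * sqrt (real (card C)) + K
     \<and> (\<forall>e\<in>E. ends e \<subseteq> C \<longrightarrow> \<not> (ends e \<inter> A \<noteq> {} \<and> ends e \<inter> B \<noteq> {}))"
    using SAB(1-7) by blast
qed

lemma final_bound:
  fixes L c K \<Omega> :: real and \<Phi> :: "real \<Rightarrow> real"
  assumes sep: "sepP c K" and M2: "M \<ge> 2" and n1: "n \<ge> 1"
    and Na: "\<And>m. 2*m > L \<Longrightarrow> 1 \<le> m \<Longrightarrow> c * sqrt m + K < m / 3"
    and Nb: "\<And>m. 2*m > L \<Longrightarrow> 1 \<le> m \<Longrightarrow> \<Omega> - \<Phi> m + c * sqrt m + K \<le> L"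
    and Nc: "\<And>m s m'. 2*m > L \<Longrightarrow> 1 \<le> m \<Longrightarrow> 0 \<le> s \<Longrightarrow> s \<le> c * sqrt m + K \<Longrightarrow> 1 \<le> m' \<Longrightarrow>
               m' \<le> 2*m/3 + s \<Longrightarrow> \<Phi> m' + s \<le> \<Phi> m"
    and top: "\<Phi> (real n) \<le> \<Omega>"
  shows "\<exists>s. contraction_sequence n s \<and>
      real (steps_cost E ends d s) \<le> real (n - 1) * (2 * real M powr (L / 2))"
proof -
  have Mpos: "real M > 0" using M2 by simp
  have w: "real (wt {..<n})^2 \<le> real M powr 0" using Mpos by (simp add: wt_V)
  have "0 \<in> {..<n}" using n1 by simp
  then have ne: "{..<n} \<noteq> {}" by blast
  have t: "0 + \<Phi> (real (card {..<n})) \<le> \<Omega>" using top by simp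
  obtain s where s: "good L {..<n} s"
    using rec[OF sep M2 Na Nb Nc _ ne w t] by blast
  have cs: "contraction_sequence n s"
    using s red_valid unfolding good_def contraction_sequence_def sing_def by blast
  have "real (pair_cost E ends d (fst st) (snd st)) \<le> 2 * real M powr (L / 2)" if st: "st \<in> set s" for st
  proof -
    define P where "P = (\<Prod>e\<in>opn (fst st) \<union> opn (snd st). d e)"
    have P2: "real P ^ 2 \<le> real M powr L" using s st unfolding good_def P_def by blast
    have "(real M powr (L / 2)) ^ 2 = real M powr L"
      using Mpos by (simp add: power2_eq_square powr_add[symmetric])
    then have "real P ^ 2 \<le> (real M powr (L / 2)) ^ 2" using P2 by simp
    then have "real P \<le> real M powr (L / 2)" by (rule power2_le_imp_le) simp
    moreover have "pair_cost E ends d (fst st) (snd st) = 2 * P"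
      unfolding pair_cost_def P_def opn_def by simp
    ultimately show ?thesis by simp
  qed
  then have "real (steps_cost E ends d s) \<le> real (length s) * (2 * real M powr (L / 2))"
    by (intro steps_cost_le) blast
  moreover have "length s = n - 1" using s unfolding good_def by simp
  ultimately show ?thesis using cs by auto
qed

end

lemma ev1: "(a::real) > 0 \<Longrightarrow> eventually (\<lambda>x::real. k \<le> a * sqrt x) at_top"
  by real_asymp

lemma ev2: "(a::real) > 0 \<Longrightarrow> e > 0 \<Longrightarrow> eventually (\<lambda>x::real. b * ln x + k \<le> a * sqrt (e * sqrt x / 2)) at_top"
  by real_asymp

lemma ev3: "eventually (\<lambda>x::real. 1 \<le> x) at_top"
  by real_asymp


theorem mainTheorem2:
  fixes M :: nat and c :: real
  assumes "M \<ge> 2" and "planar_separator_const c"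
  shows "\<forall>\<^sub>F n in sequentially.
     \<forall>(E :: nat set) ends d.
        tensor_network n E ends d M \<and> planar_graph {..<n} (underlying_edges E ends) \<longrightarrow>
        (\<exists>s. contraction_sequence n s \<and>
             real (steps_cost E ends d s)
               < 2 * real n powr (1 / log 2 (3/2))
                   * real M powr ((c / (2 - 2 * sqrt (2/3))) * sqrt (real n)))"
proof -
  have c0: "c > 0" by (rule sep_const_pos[OF assms(2)])
  obtain K where K: "\<forall>(V :: nat set) Eg. simple_graph V Eg \<and> planar_graph V Eg \<longrightarrow>
        (\<exists>S A B. S \<union> A \<union> B = V \<and> S \<inter> A = {} \<and> S \<inter> B = {} \<and> A \<inter> B = {}
           \<and> real (card A) \<le> 2 * real (card V) / 3 \<and> real (card B) \<le> 2 * real (card V) / 3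
           \<and> real (card S) \<le> c * sqrt (real (card V)) + K
           \<and> (\<forall>e\<in>Eg. \<not> (e \<inter> A \<noteq> {} \<and> e \<inter> B \<noteq> {})))"
    using assms(2) unfolding planar_separator_const_def ..
  define r where "r = sqrt (2/3::real)"
  define \<alpha> where "\<alpha> = c / (1 - r)"
  define Kp where "Kp = max K 0"
  define D where "D = Kp + \<alpha> * (c + Kp) / (2 * r)"
  define \<beta> where "\<beta> = 10 * D"
  define \<Phi> where "\<Phi> = (\<lambda>t::real. \<alpha> * sqrt t + \<beta> * ln t)"
  have r0: "r > 0" and r1: "r < 1" unfolding r_def by simp_all
  have \<alpha>0: "\<alpha> > 0" unfolding \<alpha>_def using c0 r1 by simp
  have \<alpha>r: "\<alpha> = \<alpha> * r + c" unfolding \<alpha>_def using r1 by (simp add: field_simps)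
  have "\<alpha> * r > 0" using \<alpha>0 r0 by simp
  then have ac: "\<alpha> - c > 0" using \<alpha>r by linarith
  have evr: "eventually (\<lambda>x::real. 50 * (c + Kp)^2 \<le> \<alpha> * sqrt x \<and>
       \<beta> * ln x + Kp \<le> (\<alpha> - c) * sqrt (\<alpha> * sqrt x / 2) \<and> 1 \<le> x) at_top"
    using ev1[OF \<alpha>0] ev2[OF ac \<alpha>0] ev3 by (intro eventually_conj)
  have evn: "\<forall>\<^sub>F n in sequentially. 50 * (c + Kp)^2 \<le> \<alpha> * sqrt (real n) \<and>
       \<beta> * ln (real n) + Kp \<le> (\<alpha> - c) * sqrt (\<alpha> * sqrt (real n) / 2) \<and> 1 \<le> real n"
    by (rule eventually_compose_filterlim[OF evr filterlim_real_sequentially])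
  have lg0: "log 2 (3/2::real) > 0" by simp
  have lg1: "log 2 (3/2::real) \<le> 1"
  proof -
    have "log 2 (3/2::real) \<le> log 2 2" by simp
    then show ?thesis by simp
  qed
  have p1: "1 \<le> 1 / log 2 (3/2::real)" using lg0 lg1 by (simp add: field_simps)
  have ceq: "\<alpha> * sqrt x / 2 = (c / (2 - 2 * sqrt (2/3))) * sqrt x" for x
    unfolding \<alpha>_def r_def by (simp add: field_simps)
  show ?thesis
    using evn
  proof (rule eventually_mono)
    fix n :: nat
    assume H: "50 * (c + Kp)^2 \<le> \<alpha> * sqrt (real n) \<and>
       \<beta> * ln (real n) + Kp \<le> (\<alpha> - c) * sqrt (\<alpha> * sqrt (real n) / 2) \<and> 1 \<le> real n"
    have n1: "n \<ge> 1" using H by simp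
    note N = numeric[OF r_def \<alpha>_def Kp_def D_def \<beta>_def \<Phi>_def c0 conjunct2[OF conjunct2[OF H]] conjunct1[OF H]
       conjunct1[OF conjunct2[OF H]]]
    have Na: "\<And>m. 2*m > \<alpha> * sqrt (real n) \<Longrightarrow> 1 \<le> m \<Longrightarrow> c * sqrt m + K < m / 3"
      using N by blast
    have Nb: "\<And>m. 2*m > \<alpha> * sqrt (real n) \<Longrightarrow> 1 \<le> m \<Longrightarrow> \<Phi> (real n) - \<Phi> m + c * sqrt m + K \<le> \<alpha> * sqrt (real n)"
      using N by blast
    have Nc: "\<And>m s m'. 2*m > \<alpha> * sqrt (real n) \<Longrightarrow> 1 \<le> m \<Longrightarrow> 0 \<le> s \<Longrightarrow> s \<le> c * sqrt m + K \<Longrightarrow> 1 \<le> m' \<Longrightarrow>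
               m' \<le> 2*m/3 + s \<Longrightarrow> \<Phi> m' + s \<le> \<Phi> m"
      using N by blast
    show "\<forall>(E :: nat set) ends d.
        tensor_network n E ends d M \<and> planar_graph {..<n} (underlying_edges E ends) \<longrightarrow>
        (\<exists>s. contraction_sequence n s \<and>
             real (steps_cost E ends d s)
               < 2 * real n powr (1 / log 2 (3/2))
                   * real M powr ((c / (2 - 2 * sqrt (2/3))) * sqrt (real n)))"
    proof (intro allI impI)
      fix E :: "nat set" and ends :: "nat \<Rightarrow> nat set" and d :: "nat \<Rightarrow> nat"
      assume A: "tensor_network n E ends d M \<and> planar_graph {..<n} (underlying_edges E ends)"
      interpret T: TN n E ends d M by unfold_locales (use A in simp)
      have sep: "T.sepP c K" by (rule T.sepP_from[OF K conjunct2[OF A]])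
      obtain s where s: "contraction_sequence n s"
        "real (steps_cost E ends d s) \<le> real (n - 1) * (2 * real M powr (\<alpha> * sqrt (real n) / 2))"
        using T.final_bound[where \<Phi>=\<Phi> and \<Omega>="\<Phi> (real n)" and L="\<alpha> * sqrt (real n)",
            OF sep assms(1) n1 Na Nb Nc order_refl] by blast
      define Q where "Q = real M powr ((c / (2 - 2 * sqrt (2/3))) * sqrt (real n))"
      have Q0: "Q > 0" unfolding Q_def using assms(1) by simp
      have "real (n - 1) < real n" using n1 by simp
      also have "real n = real n powr 1" using n1 by simp
      also have "\<dots> \<le> real n powr (1 / log 2 (3/2))" using p1 n1 by (intro powr_mono) auto
      finally have lt: "real (n - 1) < real n powr (1 / log 2 (3/2))" .
      have "real (steps_cost E ends d s) \<le> real (n - 1) * (2 * Q)" using s(2) ceq unfolding Q_def by simp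
      also have "\<dots> < real n powr (1 / log 2 (3/2)) * (2 * Q)" using lt Q0 by (intro mult_strict_right_mono) auto
      also have "\<dots> = 2 * real n powr (1 / log 2 (3/2)) * Q" by simp
      finally show "\<exists>s. contraction_sequence n s \<and>
             real (steps_cost E ends d s)
               < 2 * real n powr (1 / log 2 (3/2))
                   * real M powr ((c / (2 - 2 * sqrt (2/3))) * sqrt (real n))"
        using s(1) unfolding Q_def by blast
    qed
  qed
qed


end
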